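(* Let $d\ge1$ and let $P(x_1,\dots,x_d)$ be a polynomial such that for every $\mathcal{X}\subseteq\{1,\dots,d\}$ the monomial $\prod_{j\in\mathcal{X}}x_j$ has a positive coefficient, and every other monomial has coefficient zero. Let $K(\mathbf{t})=\log P(e^{t_1},\dots,e^{t_d})$. Then $P$ has full rank and is aperiodic. Moreover, for every $\boldsymbol\lambda\in(0,1)^d$ and every $\boldsymbol\ell$ on the boundary of $[-\infty,+\infty]^d$, $K(\mathbf{t})-\boldsymbol\lambda^T\mathbf{t}\to+\infty$ as $\mathbf{t}\to\boldsymbol\ell$. Consequently there exists a unique $\boldsymbol\tau\in\mathbb{R}^d$ at which the gradient of $\mathbf{t}\mapsto K(\mathbf{t})-\boldsymbol\lambda^T\mathbf{t}$ vanishes.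
   Context: For a multivariate power series $B(\mathbf{z})$ in $d$ variables, its support is $S_B=\{\mathbf{n}\in\mathbb{Z}_{\ge0}^d:[\mathbf{z}^{\mathbf{n}}]B\neq0\}$ and $\Delta(S_B)=\{\mathbf{n}-\mathbf{m}:\mathbf{n},\mathbf{m}\in S_B\}$. $B$ has full rank if the real vector space spanned by $\Delta(S_B)$ has dimension $d$. For an integer $q\ge2$, $B$ is $q$-periodic if there exist nonnegative integers $p_1,\dots,p_d$, not all divisible by $q$, and an integer $r$ such that $\{\mathbf{p}^T\mathbf{n}:\mathbf{n}\in S_B\}\subseteq r+q\mathbb{Z}_{\ge0}$; $B$ is aperiodic if it is not $q$-periodic for any $q\ge2$. *)

theory Defs
  imports "HOL-Analysis.Analysis"
begin

text \<open>A multivariate power series in d variables is represented by its coefficient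
  function on exponent vectors \<open>'d \<Rightarrow> nat\<close>; the number of variables is d = CARD('d).\<close>

type_synonym 'd mpseries = "('d \<Rightarrow> nat) \<Rightarrow> real"

definition supp :: "'d mpseries \<Rightarrow> ('d \<Rightarrow> nat) set" where
  "supp B = {n. B n \<noteq> 0}"

definition diffset :: "'d mpseries \<Rightarrow> (real ^ 'd) set" where
  "diffset B = {(\<chi> j. real (n j) - real (m j)) | n m. n \<in> supp B \<and> m \<in> supp B}"

definition full_rank :: "('d::finite) mpseries \<Rightarrow> bool" where
  "full_rank B \<longleftrightarrow> dim (span (diffset B)) = CARD('d)"

definition q_periodic :: "nat \<Rightarrow> ('d::finite) mpseries \<Rightarrow> bool" where
  "q_periodic q B \<longleftrightarrow> (\<exists>p :: 'd \<Rightarrow> nat. \<exists>r :: int.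
      (\<exists>j. \<not> q dvd p j) \<and>
      (\<forall>n \<in> supp B. \<exists>k :: nat. int (\<Sum>j\<in>UNIV. p j * n j) = r + int q * int k))"

definition aperiodic :: "('d::finite) mpseries \<Rightarrow> bool" where
  "aperiodic B \<longleftrightarrow> (\<forall>q\<ge>2. \<not> q_periodic q B)"

text \<open>Exponent vector of the squarefree monomial \<open>\<Prod>j\<in>X. x_j\<close>.\<close>
definition sqf_exp :: "'d set \<Rightarrow> ('d \<Rightarrow> nat)" where
  "sqf_exp X = (\<lambda>j. if j \<in> X then 1 else 0)"

text \<open>\<open>K(t) = log P(e^{t_1},\<dots>,e^{t_d})\<close> for a multiaffine polynomial P (all other coefficients zero).\<close>
definition Kfun :: "('d::finite) mpseries \<Rightarrow> real ^ 'd \<Rightarrow> real" where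
  "Kfun P t = ln (\<Sum>X\<in>(UNIV :: 'd set set). P (sqf_exp X) * exp (\<Sum>j\<in>X. t $ j))"

text \<open>Convergence \<open>t \<rightarrow> \<ell>\<close> in \<open>[-\<infinity>,+\<infinity>]^d\<close>: componentwise convergence in the extended reals.\<close>
definition to_evec :: "ereal ^ 'd \<Rightarrow> (real ^ 'd) filter" where
  "to_evec l = (INF j\<in>(UNIV :: 'd set). filtercomap (\<lambda>t. ereal (t $ j)) (nhds (l $ j)))"

definition ebox_boundary :: "(ereal ^ 'd) set" where
  "ebox_boundary = {l. \<exists>j. l $ j = \<infinity> \<or> l $ j = -\<infinity>}"

end

theory Submission
  imports Defs
begin


lemma supp_eq:
  fixes P :: "('d::finite) mpseries"
  assumes pos: "\<And>X. P (sqf_exp X) > 0"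
    and zero: "\<And>n. n \<notin> range sqf_exp \<Longrightarrow> P n = 0"
  shows "supp P = range sqf_exp"
  using pos zero unfolding supp_def by (auto, metis less_irrefl)

lemma fr:
  fixes P :: "('d::finite) mpseries"
  assumes pos: "\<And>X. P (sqf_exp X) > 0"
    and zero: "\<And>n. n \<notin> range sqf_exp \<Longrightarrow> P n = 0"
  shows "full_rank P"
proof -
  have "Basis \<subseteq> diffset P"
  proof
    fix v :: "real^'d" assume "v \<in> Basis"
    then obtain i where v: "v = axis i 1" by (auto simp: Basis_vec_def)
    have "v = (\<chi> j. real (sqf_exp {i} j) - real (sqf_exp {} j))"
      by (auto simp: v axis_def sqf_exp_def vec_eq_iff)
    moreover have "sqf_exp {i} \<in> supp P" "sqf_exp {} \<in> supp P"
      using supp_eq[of P, OF pos zero] by auto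
    ultimately show "v \<in> diffset P" unfolding diffset_def by blast
  qed
  then have "span (diffset P) = UNIV"
    by (metis span_Basis span_mono top.extremum_uniqueI)
  then have "dim (diffset P) = DIM(real^'d)" using dim_eq_full by blast
  then show ?thesis unfolding full_rank_def by simp
qed

lemma ap:
  fixes P :: "('d::finite) mpseries"
  assumes pos: "\<And>X. P (sqf_exp X) > 0"
    and zero: "\<And>n. n \<notin> range sqf_exp \<Longrightarrow> P n = 0"
  shows "aperiodic P"
  unfolding aperiodic_def q_periodic_def
proof (intro allI impI notI, elim exE conjE)
  fix q :: nat and p :: "'d \<Rightarrow> nat" and r :: int and j
  assume nd: "\<not> q dvd p j" and H: "\<forall>n\<in>supp P. \<exists>k. int (\<Sum>j\<in>UNIV. p j * n j) = r + int q * int k"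
  obtain k0 where k0: "int (\<Sum>i\<in>UNIV. p i * sqf_exp {} i) = r + int q * int k0"
    using H supp_eq[of P, OF pos zero] by blast
  obtain k1 where k1: "int (\<Sum>i\<in>UNIV. p i * sqf_exp {j} i) = r + int q * int k1"
    using H supp_eq[of P, OF pos zero] by blast
  have s0: "(\<Sum>i\<in>UNIV. p i * sqf_exp {} i) = 0" by (simp add: sqf_exp_def)
  have s1: "(\<Sum>i\<in>UNIV. p i * sqf_exp {j} i) = p j"
    by (simp add: sqf_exp_def if_distrib cong: if_cong)
  have "int (p j) = int q * (int k1 - int k0)" using k0 k1 s0 s1 by (simp add: algebra_simps)
  then have "int q dvd int (p j)" by simp
  then show False using nd by simp
qed

lemma Kfun_lower:
  fixes P :: "('d::finite) mpseries" and lam t :: "real^'d"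
  assumes pos: "\<And>X. P (sqf_exp X) > 0"
    and lam: "\<forall>j. 0 < lam $ j \<and> lam $ j < 1"
  shows "Kfun P t - lam \<bullet> t \<ge> ln (P (sqf_exp {j. t$j \<ge> 0})) + (\<Sum>j\<in>UNIV. min (lam$j) (1 - lam$j) * \<bar>t$j\<bar>)"
proof -
  define X0 where "X0 = {j. t$j \<ge> 0}"
  define S where "S = (\<Sum>X\<in>(UNIV :: 'd set set). P (sqf_exp X) * exp (\<Sum>j\<in>X. t $ j))"
  have "P (sqf_exp X0) * exp (\<Sum>j\<in>X0. t $ j) \<le> S"
    unfolding S_def by (rule member_le_sum) (simp_all add: less_imp_le[OF pos])
  moreover have "0 < P (sqf_exp X0) * exp (\<Sum>j\<in>X0. t $ j)" using pos by simp
  ultimately have "ln (P (sqf_exp X0) * exp (\<Sum>j\<in>X0. t $ j)) \<le> ln S" by simp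
  also have "ln (P (sqf_exp X0) * exp (\<Sum>j\<in>X0. t $ j)) = ln (P (sqf_exp X0)) + (\<Sum>j\<in>X0. t $ j)"
    using pos[of X0] by (simp add: ln_mult)
  finally have 1: "ln (P (sqf_exp X0)) + (\<Sum>j\<in>X0. t $ j) \<le> Kfun P t" unfolding Kfun_def S_def .
  have 2: "(\<Sum>j\<in>X0. t $ j) = (\<Sum>j\<in>UNIV. if t$j \<ge> 0 then t$j else 0)"
    unfolding X0_def by (simp add: sum.If_cases)
  have 3: "lam \<bullet> t = (\<Sum>j\<in>UNIV. lam$j * t$j)" by (simp add: inner_vec_def)
  have 4: "(\<Sum>j\<in>UNIV. min (lam$j) (1 - lam$j) * \<bar>t$j\<bar>) \<le> (\<Sum>j\<in>UNIV. (if t$j \<ge> 0 then t$j else 0) - lam$j * t$j)"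
  proof (rule sum_mono)
    fix j
    show "min (lam$j) (1 - lam$j) * \<bar>t$j\<bar> \<le> (if t$j \<ge> 0 then t$j else 0) - lam$j * t$j"
    proof (cases "t$j \<ge> 0")
      case True
      have "min (lam$j) (1 - lam$j) * \<bar>t$j\<bar> \<le> (1 - lam$j) * t$j"
        using True by (simp add: mult_right_mono)
      then show ?thesis using True by (simp add: algebra_simps)
    next
      case False
      have "min (lam$j) (1 - lam$j) * \<bar>t$j\<bar> \<le> lam$j * (- t$j)"
        using False by (simp add: mult_right_mono)
      then show ?thesis using False by (simp add: algebra_simps)
    qed
  qed
  show ?thesis using 1 2 3 4 unfolding X0_def[symmetric] by (simp add: sum_subtractf)
qed


lemma Kfun_deriv:
  fixes P :: "('d::finite) mpseries" and lam t :: "real^'d"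
  assumes pos: "\<And>X. P (sqf_exp X) > 0"
  shows "((\<lambda>t. Kfun P t - lam \<bullet> t) has_derivative
     (\<lambda>h. (\<Sum>X\<in>UNIV. P (sqf_exp X) * exp (\<Sum>j\<in>X. t $ j) * (\<Sum>j\<in>X. h $ j)) /
          (\<Sum>X\<in>UNIV. P (sqf_exp X) * exp (\<Sum>j\<in>X. t $ j)) - lam \<bullet> h)) (at t)"
proof -
  define S where "S = (\<lambda>t. \<Sum>X\<in>(UNIV::'d set set). P (sqf_exp X) * exp (\<Sum>j\<in>X. t $ j))"
  define S' where "S' = (\<lambda>h. \<Sum>X\<in>(UNIV::'d set set). P (sqf_exp X) * exp (\<Sum>j\<in>X. t $ j) * (\<Sum>j\<in>X. h $ j))"
  have Spos: "S t > 0" unfolding S_def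
    by (rule sum_pos) (simp_all add: pos)
  have nth: "\<And>j. ((\<lambda>t::real^'d. t $ j) has_derivative (\<lambda>h. h $ j)) (at t)"
    by (rule bounded_linear_imp_has_derivative[OF bounded_linear_vec_nth])
  have a: "\<And>X. ((\<lambda>t::real^'d. \<Sum>j\<in>X. t $ j) has_derivative (\<lambda>h. \<Sum>j\<in>X. h $ j)) (at t)"
    by (rule has_derivative_sum) (rule nth)
  have e: "\<And>X. ((\<lambda>t::real^'d. exp (\<Sum>j\<in>X. t $ j)) has_derivative (\<lambda>h. exp (\<Sum>j\<in>X. t $ j) * (\<Sum>j\<in>X. h $ j))) (at t)"
    using has_derivative_exp[OF a] by (simp add: mult.commute)
  have Sd: "(S has_derivative S') (at t)" unfolding S_def S'_def
    apply (rule has_derivative_sum)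
    using has_derivative_mult[OF has_derivative_const e] by (simp add: mult.assoc)
  have Ld: "((\<lambda>t. ln (S t)) has_derivative (\<lambda>h. S' h / S t)) (at t)"
    using DERIV_compose_FDERIV[OF DERIV_ln[OF Spos] Sd] by (simp add: divide_inverse mult.commute)
  have Id: "((\<lambda>t. lam \<bullet> t) has_derivative (\<lambda>h. lam \<bullet> h)) (at t)"
    by (rule has_derivative_inner_right[OF has_derivative_ident])
  show ?thesis
    using has_derivative_diff[OF Ld Id] unfolding Kfun_def S_def S'_def by simp
qed


lemma key_ineq: "(exp (e::real) - 1) * e \<ge> 0"
proof (cases "e \<ge> 0")
  case True then show ?thesis by simp
next
  case False then have "exp e < 1" by simp
  then show ?thesis using False by (simp add: mult_nonpos_nonpos)
qed

lemma key_ineq_strict: "(e::real) \<noteq> 0 \<Longrightarrow> (exp e - 1) * e > 0"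
proof (cases "e > 0")
  case True then show ?thesis by simp
next
  case False
  assume "e \<noteq> 0"
  with False have "e < 0" by simp
  then have "exp e < 1" by simp
  then show ?thesis using \<open>e < 0\<close> by (simp add: mult_neg_neg)
qed

lemma Kfun_lower2:
  fixes P :: "('d::finite) mpseries" and lam :: "real^'d"
  assumes pos: "\<And>X. P (sqf_exp X) > 0"
    and lam: "\<forall>j. 0 < lam $ j \<and> lam $ j < 1"
  shows "\<exists>m \<mu>. \<mu> > 0 \<and> (\<forall>t. m + \<mu> * (\<Sum>j\<in>UNIV. \<bar>t$j\<bar>) \<le> Kfun P t - lam \<bullet> t)"
proof -
  define m where "m = Min (range (\<lambda>X::'d set. ln (P (sqf_exp X))))"
  define \<mu> where "\<mu> = Min (range (\<lambda>j. min (lam$j) (1 - lam$j)))"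
  have mu: "\<mu> > 0" unfolding \<mu>_def using lam by (subst Min_gr_iff) auto
  have "m + \<mu> * (\<Sum>j\<in>UNIV. \<bar>t$j\<bar>) \<le> Kfun P t - lam \<bullet> t" for t
  proof -
    have "m \<le> ln (P (sqf_exp {j. t$j \<ge> 0}))" unfolding m_def by (rule Min_le) auto
    moreover have "\<mu> * (\<Sum>j\<in>UNIV. \<bar>t$j\<bar>) \<le> (\<Sum>j\<in>UNIV. min (lam$j) (1 - lam$j) * \<bar>t$j\<bar>)"
      unfolding sum_distrib_left
    proof (rule sum_mono)
      fix j
      have "\<mu> \<le> min (lam$j) (1 - lam$j)" unfolding \<mu>_def by (rule Min_le) auto
      then show "\<mu> * \<bar>t$j\<bar> \<le> min (lam$j) (1 - lam$j) * \<bar>t$j\<bar>" by (simp add: mult_right_mono)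
    qed
    ultimately show ?thesis using Kfun_lower[of P lam t, OF pos lam] by linarith
  qed
  then show ?thesis using mu by blast
qed

lemma main_part:
  fixes P :: "('d::finite) mpseries" and lam :: "real^'d"
  assumes pos: "\<And>X. P (sqf_exp X) > 0"
    and lam: "\<forall>j. 0 < lam $ j \<and> lam $ j < 1"
  shows "(\<forall>l \<in> ebox_boundary.
          filterlim (\<lambda>t. Kfun P t - lam \<bullet> t) at_top (to_evec l)) \<and>
       (\<exists>!tau :: real ^ 'd. ((\<lambda>t. Kfun P t - lam \<bullet> t) has_derivative (\<lambda>h. 0)) (at tau))"
proof -
  define F where "F = (\<lambda>t. Kfun P t - lam \<bullet> t)"
  obtain m \<mu> where mu: "\<mu> > 0" and lb: "\<And>t. m + \<mu> * (\<Sum>j\<in>UNIV. \<bar>t$j\<bar>) \<le> F t"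
    using Kfun_lower2[of P lam, OF pos lam] unfolding F_def by blast
  define E where "E = (\<lambda>t X. P (sqf_exp X) * exp (\<Sum>j\<in>X. t $ j))"
  define S where "S = (\<lambda>t. \<Sum>X\<in>(UNIV::'d set set). E t X)"
  define a where "a = (\<lambda>(X::'d set) (h::real^'d). \<Sum>j\<in>X. h $ j)"
  define D where "D = (\<lambda>t h. (\<Sum>X\<in>UNIV. E t X * a X h) / S t - lam \<bullet> h)"
  have Fd: "\<And>t. (F has_derivative D t) (at t)"
    unfolding F_def D_def E_def S_def a_def by (rule Kfun_deriv[of P, OF pos])
  have Epos: "\<And>t X. E t X > 0" unfolding E_def using pos by simp
  have Spos: "\<And>t. S t > 0" unfolding S_def by (rule sum_pos) (simp_all add: Epos)
  have lim: "filterlim F at_top (to_evec l)" if lb0: "l \<in> ebox_boundary" for l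
  proof -
    obtain j0 where j0: "l$j0 = \<infinity> \<or> l$j0 = -\<infinity>" using lb0 unfolding ebox_boundary_def by blast
    show ?thesis unfolding filterlim_at_top
    proof
      fix Z
      define B where "B = \<bar>Z - m\<bar> / \<mu>"
      have "eventually (\<lambda>y. y \<in> {ereal B<..} \<union> {..<ereal (-B)}) (nhds (l$j0))"
        by (rule eventually_nhds_in_open) (use j0 in auto)
      moreover have "\<forall>x::real^'d. ereal (x$j0) \<in> {ereal B<..} \<union> {..<ereal (-B)} \<longrightarrow> B < \<bar>x$j0\<bar>"
        by auto
      ultimately have "eventually (\<lambda>t. B < \<bar>t$j0\<bar>) (filtercomap (\<lambda>t. ereal (t $ j0)) (nhds (l $ j0)))"
        unfolding eventually_filtercomap by blast
      moreover have "to_evec l \<le> filtercomap (\<lambda>t. ereal (t $ j0)) (nhds (l $ j0))"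
        unfolding to_evec_def by (rule INF_lower) simp
      ultimately have ev: "eventually (\<lambda>t. B < \<bar>t$j0\<bar>) (to_evec l)" using filter_leD by blast
      show "eventually (\<lambda>t. Z \<le> F t) (to_evec l)"
      proof (rule eventually_mono[OF ev])
        fix t :: "real^'d" assume Bt: "B < \<bar>t$j0\<bar>"
        have "\<bar>t$j0\<bar> \<le> (\<Sum>j\<in>UNIV. \<bar>t$j\<bar>)" by (rule member_le_sum) auto
        with Bt have "\<mu> * B \<le> \<mu> * (\<Sum>j\<in>UNIV. \<bar>t$j\<bar>)" using mu by simp
        moreover have "\<mu> * B = \<bar>Z - m\<bar>" unfolding B_def using mu by simp
        ultimately show "Z \<le> F t" using lb[of t] by linarith
      qed
    qed
  qed
  have cont: "continuous_on UNIV F"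
    using Fd has_derivative_continuous continuous_at_imp_continuous_on by blast
  define K0 where "K0 = {t. F t \<le> F 0}"
  have "closed K0" unfolding K0_def by (rule closed_Collect_le[OF cont continuous_on_const])
  moreover have "bounded K0"
  proof -
    have "K0 \<subseteq> cball 0 ((F 0 - m) / \<mu>)"
    proof
      fix t assume "t \<in> K0"
      then have "m + \<mu> * (\<Sum>j\<in>UNIV. \<bar>t$j\<bar>) \<le> F 0" using lb[of t] unfolding K0_def by simp
      moreover have "\<mu> * norm t \<le> \<mu> * (\<Sum>j\<in>UNIV. \<bar>t$j\<bar>)" using mu norm_le_l1_cart[of t] by simp
      ultimately have "\<mu> * norm t \<le> F 0 - m" by linarith
      then have "norm t \<le> (F 0 - m) / \<mu>" using mu by (simp add: field_simps)
      then show "t \<in> cball 0 ((F 0 - m) / \<mu>)" by simp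
    qed
    then show ?thesis using bounded_cball bounded_subset by blast
  qed
  ultimately have "compact K0" using compact_eq_bounded_closed by blast
  moreover have "K0 \<noteq> {}" unfolding K0_def by auto
  ultimately obtain x where "x \<in> K0" and xmin: "\<forall>y\<in>K0. F x \<le> F y"
    using continuous_attains_inf[of K0 F] cont continuous_on_subset by blast
  then have gmin: "\<forall>y\<in>UNIV. F x \<le> F y" unfolding K0_def by (metis linorder_le_cases mem_Collect_eq order_trans)
  have "D x = (\<lambda>v. 0)"
    by (rule differential_zero_maxmin[OF _ open_UNIV Fd]) (use gmin in auto)
  then have ex: "(F has_derivative (\<lambda>h. 0)) (at x)" using Fd[of x] by simp
  have crit: "(\<Sum>X\<in>UNIV. (E t X / S t) * a X h) = lam \<bullet> h"
    if "(F has_derivative (\<lambda>h. 0)) (at t)" for t h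
  proof -
    have "D t = (\<lambda>h. 0)" using has_derivative_unique[OF Fd that] .
    then have "D t h = 0" by simp
    then show ?thesis unfolding D_def by (simp add: sum_divide_distrib)
  qed
  have uniq: "t = s" if t: "(F has_derivative (\<lambda>h. 0)) (at t)" and s: "(F has_derivative (\<lambda>h. 0)) (at s)" for t s
  proof -
    define d where "d = t - s"
    define C where "C = ln (S t) - ln (S s)"
    define e where "e = (\<lambda>X. a X d - C)"
    define w where "w = (\<lambda>t X. E t X / S t)"
    have wpos: "\<And>t X. w t X > 0" unfolding w_def using Epos Spos by simp
    have wsum: "\<And>t. (\<Sum>X\<in>UNIV. w t X) = 1" unfolding w_def S_def
      using Spos unfolding S_def by (metis sum_divide_distrib[symmetric] divide_self less_irrefl)
    have ad: "\<And>X. a X d = a X t - a X s" unfolding a_def d_def by (simp add: sum_subtractf)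
    have wrel: "w t X = w s X * exp (e X)" for X
    proof -
      have "exp (e X) = exp (a X t) / exp (a X s) * (S s / S t)"
        unfolding e_def ad C_def using Spos by (simp add: exp_diff exp_add)
      then show ?thesis unfolding w_def E_def a_def using Spos[of s] Spos[of t] by (simp add: exp_diff)
    qed
    have "(\<Sum>X\<in>UNIV. (w t X - w s X) * e X) = (\<Sum>X\<in>UNIV. w t X * a X d) - (\<Sum>X\<in>UNIV. w s X * a X d) - C * ((\<Sum>X\<in>UNIV. w t X) - (\<Sum>X\<in>UNIV. w s X))"
      unfolding e_def by (simp add: algebra_simps sum_subtractf sum_distrib_left sum.distrib)
    also have "\<dots> = 0" using crit[OF t, of d] crit[OF s, of d] wsum unfolding w_def by simp
    finally have sum0: "(\<Sum>X\<in>UNIV. w s X * ((exp (e X) - 1) * e X)) = 0"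
      unfolding wrel by (simp add: algebra_simps)
    have "\<forall>X\<in>UNIV. w s X * ((exp (e X) - 1) * e X) = 0"
      using sum_nonneg_eq_0_iff[THEN iffD1, OF _ _ sum0] wpos key_ineq by (simp add: less_imp_le)
    then have e0: "\<And>X. e X = 0"
      using wpos key_ineq_strict by (metis mult_pos_pos less_irrefl UNIV_I)
    have "C = 0" using e0[of "{}"] unfolding e_def a_def by simp
    then have "\<And>j. d $ j = 0" using e0 unfolding e_def a_def by (metis add.right_neutral diff_zero sum.empty sum.insert finite.emptyI empty_iff)
    then show "t = s" unfolding d_def by (simp add: vec_eq_iff)
  qed
  show ?thesis using lim ex uniq unfolding F_def by blast
qed

theorem lemma9:
  fixes P :: "('d::finite) mpseries"
  assumes pos: "\<And>X. P (sqf_exp X) > 0"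
    and zero: "\<And>n. n \<notin> range sqf_exp \<Longrightarrow> P n = 0"
  shows "full_rank P \<and> aperiodic P \<and>
    (\<forall>lam :: real ^ 'd. (\<forall>j. 0 < lam $ j \<and> lam $ j < 1) \<longrightarrow>
       (\<forall>l \<in> ebox_boundary.
          filterlim (\<lambda>t. Kfun P t - lam \<bullet> t) at_top (to_evec l)) \<and>
       (\<exists>!tau :: real ^ 'd. ((\<lambda>t. Kfun P t - lam \<bullet> t) has_derivative (\<lambda>h. 0)) (at tau)))"
  using fr[of P, OF pos zero] ap[of P, OF pos zero] main_part[of P, OF pos] by blast

end
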